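(* Let $\Lambda$ be quasi-lacunary with parameters $q,N$. Let $\beta>0$, $\mu\in\mathcal{M}_{x^\beta}$ and $\alpha>-1$. There exists $k_0>0$ such that for all $k\geqslant k_0$, all $f_k\in F_k$ and all $p,s\geqslant1$, \[\|f_k\|_{L^p(\mathrm{d}\mu)}\lesssim\lambda_{n_k}^{\delta}\,\|f_k\|_{L^s((1-x)^\alpha\mathrm{d}x)},\qquad\delta=\frac{1+\alpha}{s}-\frac{\beta}{p},\] where the implicit constant depends only on $p,s,\alpha,\beta$ and $q,N$ (and not on $k$ or $f_k$).
   Context: $\Lambda=(\lambda_j)_{j\geqslant0}$ is an increasing sequence of positive reals with $\sum_j1/\lambda_j<\infty$. $\Lambda$ is quasi-lacunary with parameters $q>1$, $N\geqslant1$ if $\Lambda$ is partitioned into consecutive disjoint blocks $E_k=\{\lambda_j: n_k\leqslant j<n_{k+1}\}$ ($0=n_0<n_1<\dots$) with $\#E_k\leqslant N$ and $q\leqslant\lambda_{n_{k+1}}/\lambda_{n_k}\leqslant q^{2N}$. $F_k=\operatorname{Span}\{t^\lambda:\lambda\in E_k\}$ on $[0,1]$. $\mathcal{M}_{x^\beta}$ is the set of positive Borel measures $\mu$ on $[0,1]$ with $\mu([1-\varepsilon,1])\leqslant C\varepsilon^\beta$ for all $\varepsilon\in(0,1]$, $C$ depending only on $\mu$. *)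

theory Defs
  imports "HOL-Analysis.Analysis"
begin

definition muntz_seq :: "(nat \<Rightarrow> real) \<Rightarrow> bool" where
  "muntz_seq lam \<longleftrightarrow> strict_mono lam \<and> (\<forall>j. 0 < lam j) \<and> summable (\<lambda>j. 1 / lam j)"

text \<open>Quasi-lacunarity with parameters q, N, witnessed by the block boundaries nb
  (block k is E_k = {lam j : nb k \<le> j < nb (k+1)}).\<close>
definition quasi_lacunary :: "(nat \<Rightarrow> real) \<Rightarrow> real \<Rightarrow> nat \<Rightarrow> (nat \<Rightarrow> nat) \<Rightarrow> bool" where
  "quasi_lacunary lam q N nb \<longleftrightarrow>
     nb 0 = 0 \<and> strict_mono nb \<and> (\<forall>k. nb (Suc k) - nb k \<le> N) \<and>
     (\<forall>k. q \<le> lam (nb (Suc k)) / lam (nb k) \<and> lam (nb (Suc k)) / lam (nb k) \<le> q ^ (2 * N))"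

definition block_space :: "(nat \<Rightarrow> real) \<Rightarrow> (nat \<Rightarrow> nat) \<Rightarrow> nat \<Rightarrow> (real \<Rightarrow> real) set" where
  "block_space lam nb k =
     {f. \<exists>c :: nat \<Rightarrow> real. f = (\<lambda>t. \<Sum>j\<in>{nb k..<nb (Suc k)}. c j * t powr lam j)}"

definition in_M_beta :: "real \<Rightarrow> real \<Rightarrow> real measure \<Rightarrow> bool" where
  "in_M_beta \<beta> Cmu \<mu> \<longleftrightarrow>
     sets \<mu> = sets borel \<and> emeasure \<mu> (- {0..1}) = 0 \<and>
     (\<forall>\<epsilon>\<in>{0<..1}. emeasure \<mu> {1 - \<epsilon>..1} \<le> ennreal (Cmu * \<epsilon> powr \<beta>))"

definition Lp_norm :: "real measure \<Rightarrow> real \<Rightarrow> (real \<Rightarrow> real) \<Rightarrow> real" where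
  "Lp_norm \<mu> p f = (\<integral>x. \<bar>f x\<bar> powr p \<partial>\<mu>) powr (1 / p)"

definition wLp_norm :: "real \<Rightarrow> real \<Rightarrow> (real \<Rightarrow> real) \<Rightarrow> real" where
  "wLp_norm \<alpha> s f = (LINT x:{0..1}|lborel. \<bar>f x\<bar> powr s * (1 - x) powr \<alpha>) powr (1 / s)"

end

theory Submission
  imports Defs "HOL-Real_Asymp.Real_Asymp" "HOL-Library.Landau_Symbols"
begin

definition ES :: "(nat \<Rightarrow> real) \<Rightarrow> (nat \<Rightarrow> real) \<Rightarrow> nat set \<Rightarrow> real \<Rightarrow> real" where
  "ES c \<rho> J y = (\<Sum>j\<in>J. c j * exp (\<rho> j * y))"

definition WW :: "(nat \<Rightarrow> real) \<Rightarrow> (nat \<Rightarrow> real) \<Rightarrow> real \<Rightarrow> nat list \<Rightarrow> nat \<Rightarrow> real \<Rightarrow> real" where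
  "WW c \<rho> d L i y = (\<Sum>j\<in>set L. c j * (\<Prod>l<i. exp (\<rho> j * d) - exp (\<rho> (L!l) * d)) * exp (\<rho> j * y))"

lemma WW_0: "WW c \<rho> d L 0 y = ES c \<rho> (set L) y"
  by (simp add: WW_def ES_def)

lemma WW_shift: "WW c \<rho> d L i (y + d) = exp (\<rho> (L!i) * d) * WW c \<rho> d L i y + WW c \<rho> d L (Suc i) y"
proof -
  have "WW c \<rho> d L i (y + d) = (\<Sum>j\<in>set L. c j * (\<Prod>l<i. exp (\<rho> j * d) - exp (\<rho> (L!l) * d)) * exp (\<rho> j * d) * exp (\<rho> j * y))"
    unfolding WW_def by (intro sum.cong refl) (simp add: distrib_left exp_add)
  also have "\<dots> = (\<Sum>j\<in>set L. exp (\<rho> (L!i) * d) * (c j * (\<Prod>l<i. exp (\<rho> j * d) - exp (\<rho> (L!l) * d)) * exp (\<rho> j * y))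
      + c j * ((\<Prod>l<i. exp (\<rho> j * d) - exp (\<rho> (L!l) * d)) * (exp (\<rho> j * d) - exp (\<rho> (L!i) * d))) * exp (\<rho> j * y))"
    by (intro sum.cong refl) (simp add: algebra_simps)
  also have "\<dots> = exp (\<rho> (L!i) * d) * WW c \<rho> d L i y + WW c \<rho> d L (Suc i) y"
    unfolding WW_def by (simp add: sum.distrib sum_distrib_left)
  finally show ?thesis .
qed

lemma WW_len: "WW c \<rho> d L (length L) y = 0"
  unfolding WW_def
proof (intro sum.neutral ballI)
  fix j assume "j \<in> set L"
  then obtain l where l: "l < length L" "L ! l = j" by (auto simp: in_set_conv_nth)
  have "(\<Prod>l<length L. exp (\<rho> j * d) - exp (\<rho> (L!l) * d)) = 0"
    using l by (intro prod_zero) auto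
  then show "c j * (\<Prod>l<length L. exp (\<rho> j * d) - exp (\<rho> (L!l) * d)) * exp (\<rho> j * y) = 0" by simp
qed

lemma WW_base:
  assumes A: "\<forall>j\<in>set L. exp (\<rho> j * d) \<le> A" and H: "H \<ge> 0"
  shows "i \<le> length L \<Longrightarrow> (\<forall>k\<le>i. \<bar>ES c \<rho> (set L) (y + real k * d)\<bar> \<le> H) \<Longrightarrow> \<bar>WW c \<rho> d L i y\<bar> \<le> (1 + A) ^ i * H"
proof (induction i arbitrary: y)
  case 0
  then show ?case using WW_0[of c \<rho> d L y] by force
next
  case (Suc i)
  have ai: "exp (\<rho> (L!i) * d) \<le> A" using A Suc.prems(1) by auto
  have A0: "A \<ge> 0" using ai by (meson exp_ge_zero order_trans)
  have h1: "\<bar>WW c \<rho> d L i (y + d)\<bar> \<le> (1 + A) ^ i * H"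
  proof (rule Suc.IH)
    show "i \<le> length L" using Suc.prems by simp
    show "\<forall>k\<le>i. \<bar>ES c \<rho> (set L) (y + d + real k * d)\<bar> \<le> H"
    proof (intro allI impI)
      fix k assume "k \<le> i"
      then have "\<bar>ES c \<rho> (set L) (y + real (Suc k) * d)\<bar> \<le> H" using Suc.prems(2) by auto
      then show "\<bar>ES c \<rho> (set L) (y + d + real k * d)\<bar> \<le> H" by (simp add: algebra_simps)
    qed
  qed
  have h2: "\<bar>WW c \<rho> d L i y\<bar> \<le> (1 + A) ^ i * H"
    using Suc.prems by (intro Suc.IH) auto
  have eq: "WW c \<rho> d L (Suc i) y = WW c \<rho> d L i (y + d) - exp (\<rho> (L!i) * d) * WW c \<rho> d L i y"
    using WW_shift[of c \<rho> d L i y] by simp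
  have "\<bar>exp (\<rho> (L!i) * d) * WW c \<rho> d L i y\<bar> \<le> A * ((1 + A) ^ i * H)"
    unfolding abs_mult using h2 ai A0 by (intro mult_mono) auto
  then show ?case unfolding eq using h1 by (simp add: algebra_simps)
qed

lemma WW_decay:
  assumes A: "\<forall>j\<in>set L. exp (\<rho> j * d) \<le> A" and A0: "A \<ge> 0" and H: "H \<ge> 0" and G: "\<Gamma> \<ge> 1"
    and th: "\<theta> \<ge> A + 1 / \<Gamma>"
    and samp: "\<forall>k\<le>length L. \<bar>ES c \<rho> (set L) (y0 + real k * d)\<bar> \<le> H"
  shows "i \<le> length L \<Longrightarrow> \<bar>WW c \<rho> d L i (y0 + real n * d)\<bar> \<le> (1 + A) ^ length L * \<Gamma> ^ (length L - i) * \<theta> ^ n * H"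
proof (induction "length L - i" arbitrary: i n)
  case 0
  then have "i = length L" by simp
  moreover have "\<theta> \<ge> 0" using th A0 G
    by (metis add_nonneg_nonneg divide_nonneg_nonneg order_trans zero_le_one)
  ultimately show ?case using WW_len[of c \<rho> d L] A0 H G by simp
next
  case (Suc m)
  then have iL: "i < length L" by simp
  have th0: "\<theta> \<ge> 0" using th A0 G
    by (metis add_nonneg_nonneg divide_nonneg_nonneg order_trans zero_le_one)
  define K where "K = (1 + A) ^ length L * \<Gamma> ^ (length L - Suc i)"
  have K0: "K \<ge> 0" unfolding K_def using A0 G by simp
  have KK: "(1 + A) ^ length L * \<Gamma> ^ (length L - i) = K * \<Gamma>"
  proof -
    have "length L - i = Suc (length L - Suc i)" using iL by simp
    then show ?thesis unfolding K_def by (simp add: algebra_simps)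
  qed
  have IH: "\<bar>WW c \<rho> d L (Suc i) (y0 + real n * d)\<bar> \<le> K * \<theta> ^ n * H" for n
    using Suc.hyps(1)[of "Suc i" n] Suc.hyps(2) iL unfolding K_def by simp
  have ai: "exp (\<rho> (L!i) * d) \<le> A" using A iL by auto
  show ?case unfolding KK
  proof (induction n)
    case 0
    have "\<bar>WW c \<rho> d L i (y0 + real 0 * d)\<bar> \<le> (1 + A) ^ i * H"
      using WW_base[OF A H, of i c y0] samp iL by auto
    also have "\<dots> \<le> (1 + A) ^ length L * H"
      using A0 H iL by (intro mult_right_mono power_increasing) auto
    also have "\<dots> \<le> (1 + A) ^ length L * \<Gamma> ^ (length L - i) * H"
      using A0 H G by (intro mult_right_mono mult_left_mono) (auto simp: one_le_power)
    finally show ?case unfolding KK by simp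
  next
    case (Suc n)
    have eq: "y0 + real (Suc n) * d = (y0 + real n * d) + d" by (simp add: algebra_simps)
    have "\<bar>WW c \<rho> d L i (y0 + real (Suc n) * d)\<bar>
        \<le> exp (\<rho> (L!i) * d) * \<bar>WW c \<rho> d L i (y0 + real n * d)\<bar> + \<bar>WW c \<rho> d L (Suc i) (y0 + real n * d)\<bar>"
      unfolding eq WW_shift by (simp add: abs_mult order_trans[OF abs_triangle_ineq])
    also have "\<dots> \<le> A * (K * \<Gamma> * \<theta> ^ n * H) + K * \<theta> ^ n * H"
      using Suc.IH IH ai A0 by (intro add_mono mult_mono) auto
    also have "\<dots> = K * \<theta> ^ n * H * (A * \<Gamma> + 1)" by (simp add: algebra_simps)
    also have "\<dots> \<le> K * \<theta> ^ n * H * (\<theta> * \<Gamma>)"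
    proof (intro mult_left_mono)
      have "A + 1 / \<Gamma> \<le> \<theta>" by (rule th)
      then have "(A + 1 / \<Gamma>) * \<Gamma> \<le> \<theta> * \<Gamma>" using G by (intro mult_right_mono) auto
      then show "A * \<Gamma> + 1 \<le> \<theta> * \<Gamma>" using G by (simp add: distrib_right)
    qed (use K0 th0 H in auto)
    also have "\<dots> = K * \<Gamma> * \<theta> ^ Suc n * H" by (simp add: algebra_simps)
    finally show ?case .
  qed
qed

lemma ES_bound:
  assumes J: "finite J" "card J \<le> N"
    and A: "\<forall>j\<in>J. exp (\<rho> j * d) \<le> A" and A0: "A \<ge> 0" and H: "H \<ge> 0" and G: "\<Gamma> \<ge> 1"
    and th: "\<theta> \<ge> A + 1 / \<Gamma>"
    and samp: "\<forall>k\<le>card J. \<bar>ES c \<rho> J (y0 + real k * d)\<bar> \<le> H"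
  shows "\<bar>ES c \<rho> J (y0 + real n * d)\<bar> \<le> (1 + A) ^ N * \<Gamma> ^ N * \<theta> ^ n * H"
proof -
  define L where "L = sorted_list_of_set J"
  have sL: "set L = J" and lL: "length L = card J" using J by (auto simp: L_def)
  have th0: "\<theta> \<ge> 0" using th A0 G
    by (metis add_nonneg_nonneg divide_nonneg_nonneg order_trans zero_le_one)
  have "\<bar>ES c \<rho> J (y0 + real n * d)\<bar> = \<bar>WW c \<rho> d L 0 (y0 + real n * d)\<bar>"
    by (simp add: WW_0 sL)
  also have "\<dots> \<le> (1 + A) ^ length L * \<Gamma> ^ (length L - 0) * \<theta> ^ n * H"
    by (rule WW_decay) (use A A0 H G th samp sL lL in auto)
  also have "\<dots> \<le> (1 + A) ^ N * \<Gamma> ^ N * \<theta> ^ n * H"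
    using lL J A0 G th0 H
    by (intro mult_right_mono mult_mono power_increasing) (auto simp: zero_le_mult_iff)
  finally show ?thesis .
qed

lemma ES_cont: "continuous_on S (ES c \<rho> J)"
  unfolding ES_def by (intro continuous_intros)

lemma g_cont:
  assumes "s > 0" shows "isCont (\<lambda>u. \<bar>ES c \<rho> J u\<bar> powr s) x"
proof -
  have "continuous_on UNIV (\<lambda>u. \<bar>ES c \<rho> J u\<bar> powr s)"
    using assms by (intro continuous_on_powr' continuous_intros ES_cont) auto
  then show ?thesis by (simp add: continuous_on_eq_continuous_at)
qed

lemma pow_sum_le:
  fixes a :: "nat \<Rightarrow> real"
  assumes S: "finite S" and a: "\<And>l. l \<in> S \<Longrightarrow> a l \<ge> 0" and s: "s > 0"
  shows "(\<Sum>l\<in>S. a l) powr s \<le> real (card S) powr s * (\<Sum>l\<in>S. a l powr s)"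
proof -
  define T where "T = (\<Sum>l\<in>S. a l powr s)"
  have T0: "T \<ge> 0" unfolding T_def by (intro sum_nonneg) auto
  have each: "a l \<le> T powr (1/s)" if "l \<in> S" for l
  proof -
    have "a l powr s \<le> T" unfolding T_def using S that
      by (intro member_le_sum) auto
    then have "(a l powr s) powr (1/s) \<le> T powr (1/s)"
      using s by (intro powr_mono2) auto
    then show ?thesis using a[OF that] s by (simp add: powr_powr)
  qed
  have "(\<Sum>l\<in>S. a l) \<le> (\<Sum>l\<in>S. T powr (1/s))" using each by (intro sum_mono) auto
  also have "\<dots> = real (card S) * T powr (1/s)" by simp
  finally have le: "(\<Sum>l\<in>S. a l) \<le> real (card S) * T powr (1/s)" .
  have "(\<Sum>l\<in>S. a l) powr s \<le> (real (card S) * T powr (1/s)) powr s"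
    using le a by (intro powr_mono2) (auto intro: sum_nonneg less_imp_le[OF s])
  also have "\<dots> = real (card S) powr s * T"
    using T0 s by (simp add: powr_mult powr_powr)
  finally show ?thesis unfolding T_def .
qed

lemma stage1_point:
  assumes J: "finite J" "card J \<le> N" and \<rho>: "\<forall>j\<in>J. \<rho> j \<ge> 0" and \<sigma>: "\<sigma> > 0"
  shows "\<bar>ES c \<rho> J y\<bar> \<le> 2 ^ N * 2 ^ (N+1) * (\<Sum>l\<in>{1..N+1}. \<bar>ES c \<rho> J (y + real l * \<sigma>)\<bar>)"
proof -
  define H where "H = (\<Sum>l\<in>{1..N+1}. \<bar>ES c \<rho> J (y + real l * \<sigma>)\<bar>)"
  have H0: "H \<ge> 0" unfolding H_def by (intro sum_nonneg) auto
  have samp: "\<forall>k\<le>card J. \<bar>ES c \<rho> J ((y + real (N+1) * \<sigma>) + real k * (-\<sigma>))\<bar> \<le> H"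
  proof (intro allI impI)
    fix k assume k: "k \<le> card J"
    have eq: "(y + real (N+1) * \<sigma>) + real k * (-\<sigma>) = y + real (N + 1 - k) * \<sigma>"
      using k J by (simp add: algebra_simps of_nat_diff)
    show "\<bar>ES c \<rho> J ((y + real (N+1) * \<sigma>) + real k * (-\<sigma>))\<bar> \<le> H"
      unfolding eq H_def using k J
      by (intro member_le_sum[where f="\<lambda>l. \<bar>ES c \<rho> J (y + real l * \<sigma>)\<bar>"]) auto
  qed
  have A: "\<forall>j\<in>J. exp (\<rho> j * (-\<sigma>)) \<le> 1" using \<rho> \<sigma> by (auto simp: mult_nonneg_nonneg)
  have "\<bar>ES c \<rho> J ((y + real (N+1) * \<sigma>) + real (N+1) * (-\<sigma>))\<bar> \<le> (1 + 1) ^ N * 1 ^ N * 2 ^ (N+1) * H"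
    by (rule ES_bound[OF J A _ H0 _ _ samp]) auto
  then show ?thesis unfolding H_def by simp
qed

lemma affine_term:
  fixes g :: "real \<Rightarrow> real"
  assumes gc: "\<And>u. isCont g u" and g0: "\<And>u. g u \<ge> 0" and l: "l \<ge> 1" and \<delta>: "\<delta> > 0"
    and sub: "{y + l * \<delta> .. y + l * (2 * \<delta>)} \<subseteq> {a..b}"
  shows "(\<integral>\<sigma>. g (y + l * \<sigma>) * indicator {\<delta>..2*\<delta>} \<sigma> \<partial>lborel) \<le> (\<integral>u. g u * indicator {a..b} u \<partial>lborel)"
proof -
  define f where "f = (\<lambda>u. g u * indicator {y + l * \<delta> .. y + l * (2 * \<delta>)} u)"
  have l0: "l \<noteq> 0" using l by simp
  have "(\<integral>u. f u \<partial>lborel) = \<bar>l\<bar> *\<^sub>R (\<integral>\<sigma>. f (y + l * \<sigma>) \<partial>lborel)"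
    by (rule lborel_integral_real_affine[OF l0])
  also have "(\<lambda>\<sigma>. f (y + l * \<sigma>)) = (\<lambda>\<sigma>. g (y + l * \<sigma>) * indicator {\<delta>..2*\<delta>} \<sigma>)"
    using l by (auto simp: f_def indicator_def fun_eq_iff)
  finally have eq: "(\<integral>\<sigma>. g (y + l * \<sigma>) * indicator {\<delta>..2*\<delta>} \<sigma> \<partial>lborel) = (\<integral>u. f u \<partial>lborel) / l"
    using l by simp
  have If: "(\<integral>u. f u \<partial>lborel) \<le> (\<integral>u. g u * indicator {a..b} u \<partial>lborel)"
  proof (rule integral_mono)
    show "integrable lborel f" unfolding f_def by (rule borel_integrable_atLeastAtMost) (use gc in auto)
    show "integrable lborel (\<lambda>u. g u * indicator {a..b} u)" by (rule borel_integrable_atLeastAtMost) (use gc in auto)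
    show "f u \<le> g u * indicator {a..b} u" for u
    proof (cases "u \<in> {y + l * \<delta> .. y + l * (2 * \<delta>)}")
      case True
      with sub have "u \<in> {a..b}" by blast
      with True show ?thesis by (simp add: f_def)
    next
      case False
      then show ?thesis using g0[of u] by (simp add: f_def)
    qed
  qed
  have f0: "(\<integral>u. f u \<partial>lborel) \<ge> 0" unfolding f_def
    by (rule integral_nonneg_AE) (auto simp: g0 indicator_def)
  have "(\<integral>u. f u \<partial>lborel) / l \<le> (\<integral>u. f u \<partial>lborel)"
    using f0 l by (simp add: divide_le_eq mult_le_cancel_left1 order_trans[OF _ mult_right_mono[of 1 l]])
  then show ?thesis using eq If by linarith
qed

lemma stage1:
  assumes J: "finite J" "card J \<le> N" and \<rho>: "\<forall>j\<in>J. \<rho> j \<ge> 0" and s: "s \<ge> 1"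
    and y: "-1 \<le> y" "y \<le> -3/4"
  shows "\<bar>ES c \<rho> J y\<bar> powr s \<le> (2 ^ (2*N+1) * real (N+1)) powr s * real (N+1) * (8 * real (N+1))
            * (\<integral>u. \<bar>ES c \<rho> J u\<bar> powr s * indicator {-1..-1/2} u \<partial>lborel)"
proof -
  define g where "g = (\<lambda>u. \<bar>ES c \<rho> J u\<bar> powr s)"
  define \<delta> :: real where "\<delta> = 1 / (8 * real (N+1))"
  define K1 where "K1 = (2 ^ (2*N+1) * real (N+1)) powr s"
  define I where "I = (\<integral>u. g u * indicator {-1..-1/2} u \<partial>lborel)"
  have \<delta>0: "\<delta> > 0" unfolding \<delta>_def by simp
  have gc: "\<And>u. isCont g u" unfolding g_def using s by (intro g_cont) auto
  have g0: "\<And>u. g u \<ge> 0" unfolding g_def by simp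
  have K10: "K1 \<ge> 0" unfolding K1_def by simp
  have pt: "g y \<le> K1 * (\<Sum>l\<in>{1..N+1}. g (y + real l * \<sigma>))" if "\<sigma> > 0" for \<sigma>
  proof -
    define H where "H = (\<Sum>l\<in>{1..N+1}. \<bar>ES c \<rho> J (y + real l * \<sigma>)\<bar>)"
    have H0: "H \<ge> 0" unfolding H_def by (intro sum_nonneg) auto
    have "\<bar>ES c \<rho> J y\<bar> \<le> 2 ^ N * 2 ^ (N+1) * H"
      unfolding H_def by (rule stage1_point[OF J \<rho> that])
    also have "2 ^ N * 2 ^ (N+1) = (2::real) ^ (2*N+1)" by (simp add: power_add[symmetric])
    finally have F1: "\<bar>ES c \<rho> J y\<bar> \<le> 2 ^ (2*N+1) * H" .
    have "g y \<le> (2 ^ (2*N+1) * H) powr s"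
      unfolding g_def using F1 s by (intro powr_mono2) auto
    also have "\<dots> = (2 ^ (2*N+1)) powr s * H powr s" using H0 by (simp add: powr_mult)
    also have "H powr s \<le> real (card {1..N+1}) powr s * (\<Sum>l\<in>{1..N+1}. g (y + real l * \<sigma>))"
      unfolding H_def g_def using s by (intro pow_sum_le) auto
    finally have "g y \<le> (2 ^ (2*N+1)) powr s * (real (N+1) powr s * (\<Sum>l\<in>{1..N+1}. g (y + real l * \<sigma>)))"
      by (simp add: mult_left_mono)
    also have "\<dots> = K1 * (\<Sum>l\<in>{1..N+1}. g (y + real l * \<sigma>))"
      unfolding K1_def by (simp add: powr_mult)
    finally show ?thesis .
  qed
  have intL: "integrable lborel (\<lambda>\<sigma>. g y * indicator {\<delta>..2*\<delta>} \<sigma>)"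
    by (rule borel_integrable_atLeastAtMost) auto
  have intl: "integrable lborel (\<lambda>\<sigma>. g (y + real l * \<sigma>) * indicator {\<delta>..2*\<delta>} \<sigma>)" for l
    by (rule borel_integrable_atLeastAtMost) (use gc in \<open>auto intro!: continuous_intros isCont_o2[OF _ gc]\<close>)
  have "(\<integral>\<sigma>. g y * indicator {\<delta>..2*\<delta>} \<sigma> \<partial>lborel)
      \<le> (\<integral>\<sigma>. K1 * (\<Sum>l\<in>{1..N+1}. g (y + real l * \<sigma>) * indicator {\<delta>..2*\<delta>} \<sigma>) \<partial>lborel)"
  proof (rule integral_mono[OF intL])
    show "integrable lborel (\<lambda>\<sigma>. K1 * (\<Sum>l\<in>{1..N+1}. g (y + real l * \<sigma>) * indicator {\<delta>..2*\<delta>} \<sigma>))"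
    proof (rule integrable_mult_right)
      show "integrable lborel (\<lambda>\<sigma>. \<Sum>l\<in>{1..N+1}. g (y + real l * \<sigma>) * indicator {\<delta>..2*\<delta>} \<sigma>)"
        by (rule Bochner_Integration.integrable_sum) (rule intl)
    qed
    fix \<sigma>
    show "g y * indicator {\<delta>..2*\<delta>} \<sigma> \<le> K1 * (\<Sum>l\<in>{1..N+1}. g (y + real l * \<sigma>) * indicator {\<delta>..2*\<delta>} \<sigma>)"
    proof (cases "\<sigma> \<in> {\<delta>..2*\<delta>}")
      case True
      then show ?thesis using pt[of \<sigma>] \<delta>0 by simp
    qed simp
  qed
  also have "\<dots> = K1 * (\<Sum>l\<in>{1..N+1}. (\<integral>\<sigma>. g (y + real l * \<sigma>) * indicator {\<delta>..2*\<delta>} \<sigma> \<partial>lborel))"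
    unfolding integral_mult_right_zero
    by (intro arg_cong[where f="(*) K1"] Bochner_Integration.integral_sum intl)
  also have "\<dots> \<le> K1 * (\<Sum>l\<in>{1..N+1}. I)"
  proof (intro mult_left_mono[OF _ K10] sum_mono)
    fix l assume l: "l \<in> {1..N+1}"
    have sub: "{y + real l * \<delta> .. y + real l * (2 * \<delta>)} \<subseteq> {-1..-1/2}"
    proof -
      have "real l * \<delta> \<ge> 0" using \<delta>0 by simp
      moreover have "real l * (2 * \<delta>) \<le> 1/4"
      proof -
        have "real l \<le> real (N+1)" using l by simp
        then have "real l * (2 * \<delta>) \<le> real (N+1) * (2 * \<delta>)" using \<delta>0 by (intro mult_right_mono) auto
        also have "\<dots> = 1/4" unfolding \<delta>_def by simp
        finally show ?thesis .
      qed
      ultimately show ?thesis using y by auto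
    qed
    show "(\<integral>\<sigma>. g (y + real l * \<sigma>) * indicator {\<delta>..2*\<delta>} \<sigma> \<partial>lborel) \<le> I"
      unfolding I_def by (rule affine_term[OF gc g0 _ \<delta>0 sub]) (use l in auto)
  qed
  finally have "g y * \<delta> \<le> K1 * (real (N+1) * I)" using \<delta>0 by simp
  then have "g y \<le> K1 * (real (N+1) * I) / \<delta>" using \<delta>0 by (simp add: le_divide_eq)
  then show ?thesis unfolding g_def K1_def I_def \<delta>_def by (simp add: algebra_simps)
qed

definition dl :: "nat \<Rightarrow> real" where "dl N = 1 / (8 * real N)"
definition Gm :: "nat \<Rightarrow> real" where "Gm N = 1 / (exp (- dl N / 2) - exp (- dl N))"
definition K2 :: "nat \<Rightarrow> real \<Rightarrow> real" where
  "K2 N Q = exp (1/2) * (2 ^ N * Gm N ^ N + (1 + exp (Q * dl N)) ^ (9 * N))"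

lemma dl_pos: "N \<ge> 1 \<Longrightarrow> dl N > 0" by (simp add: dl_def)

lemma Gm_ge1: assumes "N \<ge> 1" shows "Gm N \<ge> 1"
proof -
  have d: "dl N > 0" using dl_pos[OF assms] .
  obtain e1 e2 where e1: "e1 = exp (- dl N / 2)" and e2: "e2 = exp (- dl N)" by blast
  define x where "x = e1 - e2"
  have "e2 < e1" unfolding e1 e2 using d by simp
  moreover have "e1 \<le> 1" unfolding e1 using d by simp
  moreover have "e2 > 0" unfolding e2 by simp
  ultimately have "0 < x" "x \<le> 1" unfolding x_def by linarith+
  then have "1 \<le> 1 / x" by (simp add: le_divide_eq)
  then show ?thesis unfolding Gm_def x_def e1 e2 .
qed

lemma K2_pos: "N \<ge> 1 \<Longrightarrow> K2 N Q > 0"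
proof -
  assume N: "N \<ge> 1"
  have "1 + exp (Q * dl N) > 0" by (smt (verit) exp_gt_zero)
  then have p: "(1 + exp (Q * dl N)) ^ (9*N) > 0" by (rule zero_less_power)
  have "Gm N > 0" using Gm_ge1[OF N] by simp
  then have "Gm N ^ N > 0" by simp
  then have q: "2 ^ N * Gm N ^ N > 0" by simp
  show ?thesis unfolding K2_def by (intro mult_pos_pos add_pos_pos p q) simp
qed

lemma samp_arith: fixes y y0 \<delta> :: real and k N n :: nat
  assumes a: "real k * \<delta> \<le> real N * \<delta>" and b: "real k * \<delta> \<ge> 0"
  and c: "real (N+1) * \<delta> = real N * \<delta> + \<delta>"
  and d: "(real n + 1) * \<delta> = real n * \<delta> + \<delta>"
  and e: "y0 + real k * (-\<delta>) = y + real n * \<delta> - real k * \<delta>"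
  and n1': "real n * \<delta> \<le> -3/4 - y" and n2': "-3/4 - y < (real n + 1) * \<delta>" and dN: "real (N+1) * \<delta> \<le> 1/4"
  shows "-1 \<le> y0 + real k * (-\<delta>)" "y0 + real k * (-\<delta>) \<le> -3/4"
proof -
  have s1: "y + real n * \<delta> > -3/4 - \<delta>" using n2' d by linarith
  have s3: "real N * \<delta> + \<delta> \<le> 1/4" using c dN by linarith
  show "-1 \<le> y0 + real k * (-\<delta>)" using e s1 a s3 by linarith
  show "y0 + real k * (-\<delta>) \<le> -3/4" using e n1' b by linarith
qed

lemma samp_arith2: fixes y y0 \<delta> :: real and k N n :: nat
  assumes a: "real k * \<delta> \<le> real N * \<delta>" and b: "real k * \<delta> \<ge> 0"
  and c: "real (N+1) * \<delta> = real N * \<delta> + \<delta>"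
  and d: "(real n + 1) * \<delta> = real n * \<delta> + \<delta>"
  and e: "y0 + real k * \<delta> = y - real n * \<delta> + real k * \<delta>"
  and n1': "real n * \<delta> \<le> y + 1" and n2': "y + 1 < (real n + 1) * \<delta>" and dN: "real (N+1) * \<delta> \<le> 1/4"
  shows "-1 \<le> y0 + real k * \<delta>" "y0 + real k * \<delta> \<le> -3/4"
proof -
  have s1: "y - real n * \<delta> < -1 + \<delta>" using n2' d by linarith
  have s3: "real N * \<delta> + \<delta> \<le> 1/4" using c dN by linarith
  show "-1 \<le> y0 + real k * \<delta>" using e n1' b by linarith
  show "y0 + real k * \<delta> \<le> -3/4" using e s1 a s3 by linarith
qed

lemma stage2:
  assumes J: "finite J" "card J \<le> N" and N: "N \<ge> 1"
    and \<rho>: "\<forall>j\<in>J. 1 \<le> \<rho> j \<and> \<rho> j \<le> Q" and H: "H \<ge> 0"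
    and Hb: "\<forall>u\<in>{-1..-3/4}. \<bar>ES c \<rho> J u\<bar> \<le> H" and y: "y \<le> 0"
  shows "\<bar>ES c \<rho> J y\<bar> \<le> K2 N Q * exp (y/2) * H"
proof -
  define \<delta> where "\<delta> = dl N"
  have \<delta>0: "\<delta> > 0" unfolding \<delta>_def using dl_pos[OF N] .
  have \<delta>N: "real (N+1) * \<delta> \<le> 1/4"
  proof -
    have "real (N+1) * \<delta> = (real N + 1) / (8 * real N)" unfolding \<delta>_def dl_def by simp
    also have "\<dots> \<le> 1/4" using N by (simp add: divide_le_eq)
    finally show ?thesis .
  qed
  have \<delta>q: "\<delta> \<le> 1/4"
  proof -
    have "\<delta> \<le> real (N+1) * \<delta>" using \<delta>0 by simp
    then show ?thesis using \<delta>N by linarith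
  qed
  have e1: "exp (y/2) * exp (1/2) \<ge> 1" if "y \<ge> -1"
  proof -
    have "exp (y/2) * exp (1/2) = exp ((y+1)/2)" by (simp add: exp_add[symmetric] add_divide_distrib)
    also have "\<dots> \<ge> 1" using that by simp
    finally show ?thesis .
  qed
  show ?thesis
  proof (cases "y \<le> -3/4")
    case True
    define n where "n = nat \<lfloor>(-3/4 - y) / \<delta>\<rfloor>"
    have fl0: "(-3/4 - y) / \<delta> \<ge> 0" using True \<delta>0 by simp
    have n1: "real n \<le> (-3/4 - y) / \<delta>" unfolding n_def using fl0 by linarith
    have n2: "(-3/4 - y) / \<delta> < real n + 1" unfolding n_def using fl0 by linarith
    have n1': "real n * \<delta> \<le> -3/4 - y" using n1 \<delta>0 by (simp add: le_divide_eq)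
    have n2': "-3/4 - y < (real n + 1) * \<delta>" using n2 \<delta>0 by (simp add: divide_less_eq)
    define y0 where "y0 = y + real n * \<delta>"
    have samp: "\<forall>k\<le>card J. \<bar>ES c \<rho> J (y0 + real k * (-\<delta>))\<bar> \<le> H"
    proof (intro allI impI)
      fix k assume k: "k \<le> card J"
      have a: "real k * \<delta> \<le> real N * \<delta>" using k J \<delta>0 by (intro mult_right_mono) auto
      have b: "real k * \<delta> \<ge> 0" using \<delta>0 by simp
      have c: "real (N+1) * \<delta> = real N * \<delta> + \<delta>" by (simp add: algebra_simps)
      have d: "(real n + 1) * \<delta> = real n * \<delta> + \<delta>" by (simp add: algebra_simps)
      have e: "y0 + real k * (-\<delta>) = y + real n * \<delta> - real k * \<delta>" by (simp add: y0_def)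
      have "-1 \<le> y0 + real k * (-\<delta>)" "y0 + real k * (-\<delta>) \<le> -3/4"
        using samp_arith[OF a b c d e n1' n2' \<delta>N] by auto
      then have "y0 + real k * (-\<delta>) \<in> {-1..-3/4}" by simp
      then show "\<bar>ES c \<rho> J (y0 + real k * (-\<delta>))\<bar> \<le> H" using Hb by blast
    qed
    have A: "\<forall>j\<in>J. exp (\<rho> j * (-\<delta>)) \<le> exp (-\<delta>)" using \<rho> \<delta>0 by auto
    have th: "exp (-\<delta>/2) \<ge> exp (-\<delta>) + 1 / Gm N" unfolding Gm_def \<delta>_def by simp
    have "\<bar>ES c \<rho> J (y0 + real n * (-\<delta>))\<bar> \<le> (1 + exp (-\<delta>)) ^ N * Gm N ^ N * exp (-\<delta>/2) ^ n * H"
      by (rule ES_bound[OF J A _ H Gm_ge1[OF N] th samp]) simp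
    also have "\<dots> \<le> 2 ^ N * Gm N ^ N * (exp (1/2) * exp (y/2)) * H"
    proof (intro mult_right_mono[OF _ H] mult_mono)
      show "(1 + exp (-\<delta>)) ^ N \<le> 2 ^ N" using \<delta>0 by (intro power_mono) auto
      have "exp (-\<delta>/2) ^ n = exp (- (real n * \<delta>) / 2)" by (simp add: exp_of_nat_mult[symmetric])
      also have "\<dots> \<le> exp ((1 + y) / 2)" using n2' \<delta>q by (simp add: algebra_simps)
      also have "\<dots> = exp (1/2) * exp (y/2)" by (simp add: exp_add[symmetric] add_divide_distrib)
      finally show "exp (-\<delta>/2) ^ n \<le> exp (1/2) * exp (y/2)" .
    qed (use Gm_ge1[OF N] in auto)
    also have "\<dots> \<le> K2 N Q * exp (y/2) * H"
    proof -
      have "2 ^ N * Gm N ^ N \<le> 2 ^ N * Gm N ^ N + (1 + exp (Q * dl N)) ^ (9 * N)" by simp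
      then have "2 ^ N * Gm N ^ N * (exp (1/2) * exp (y/2)) \<le> K2 N Q * exp (y/2)"
        unfolding K2_def by (simp add: algebra_simps)
      then show ?thesis using H by (intro mult_right_mono) auto
    qed
    finally show ?thesis unfolding y0_def by (simp add: algebra_simps)
  next
    case False
    define n where "n = nat \<lfloor>(y + 1) / \<delta>\<rfloor>"
    have fl0: "(y + 1) / \<delta> \<ge> 0" using False \<delta>0 by simp
    have n1: "real n \<le> (y + 1) / \<delta>" unfolding n_def using fl0 by linarith
    have n2: "(y + 1) / \<delta> < real n + 1" unfolding n_def using fl0 by linarith
    have n1': "real n * \<delta> \<le> y + 1" using n1 \<delta>0 by (simp add: le_divide_eq)
    have n2': "y + 1 < (real n + 1) * \<delta>" using n2 \<delta>0 by (simp add: divide_less_eq)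
    define y0 where "y0 = y - real n * \<delta>"
    have samp: "\<forall>k\<le>card J. \<bar>ES c \<rho> J (y0 + real k * \<delta>)\<bar> \<le> H"
    proof (intro allI impI)
      fix k assume k: "k \<le> card J"
      have a: "real k * \<delta> \<le> real N * \<delta>" using k J \<delta>0 by (intro mult_right_mono) auto
      have b: "real k * \<delta> \<ge> 0" using \<delta>0 by simp
      have c: "real (N+1) * \<delta> = real N * \<delta> + \<delta>" by (simp add: algebra_simps)
      have d: "(real n + 1) * \<delta> = real n * \<delta> + \<delta>" by (simp add: algebra_simps)
      have e: "y0 + real k * \<delta> = y - real n * \<delta> + real k * \<delta>" by (simp add: y0_def)
      have "y0 + real k * \<delta> \<in> {-1..-3/4}"
        using samp_arith2[OF a b c d e n1' n2' \<delta>N] by auto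
      then show "\<bar>ES c \<rho> J (y0 + real k * \<delta>)\<bar> \<le> H" using Hb by blast
    qed
    define A where "A = exp (Q * \<delta>)"
    have A: "\<forall>j\<in>J. exp (\<rho> j * \<delta>) \<le> A" unfolding A_def using \<rho> \<delta>0 by auto
    have "\<bar>ES c \<rho> J (y0 + real n * \<delta>)\<bar> \<le> (1 + A) ^ N * 1 ^ N * (A + 1) ^ n * H"
      by (rule ES_bound[OF J A _ H _ _ samp]) (auto simp: A_def)
    also have "\<dots> \<le> (1 + A) ^ N * (1 + A) ^ (8 * N) * H"
    proof -
      have "real n \<le> 1 / \<delta>" using n1 y \<delta>0 by (smt (verit) divide_right_mono)
      also have "1 / \<delta> = real (8 * N)" unfolding \<delta>_def dl_def by simp
      finally have "n \<le> 8 * N" by linarith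
      moreover have "1 \<le> 1 + A" unfolding A_def by (smt (verit) exp_gt_zero)
      ultimately have "(1 + A) ^ n \<le> (1 + A) ^ (8 * N)"
        by (intro power_increasing)
      then have "(A + 1) ^ n \<le> (1 + A) ^ (8 * N)" by (simp add: add.commute)
      moreover have "(1 + A) ^ N \<ge> 0" using \<open>1 \<le> 1 + A\<close> by simp
      ultimately have "(1 + A) ^ N * (A + 1) ^ n \<le> (1 + A) ^ N * (1 + A) ^ (8 * N)"
        by (rule mult_left_mono)
      then show ?thesis using H by (simp add: mult_right_mono)
    qed
    also have "\<dots> = (1 + A) ^ (9 * N) * H" by (simp add: power_add[symmetric])
    also have "\<dots> \<le> K2 N Q * exp (y/2) * H"
    proof -
      have "(1 + A) ^ (9 * N) \<le> (2 ^ N * Gm N ^ N + (1 + A) ^ (9 * N)) * (exp (1/2) * exp (y/2))"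
      proof -
        have g0: "Gm N ^ N \<ge> 0" using Gm_ge1[OF N] by simp
        have X: "(1 + A) ^ (9 * N) \<le> 2 ^ N * Gm N ^ N + (1 + A) ^ (9 * N)"
          using g0 by simp
        have E: "exp (1/2) * exp (y/2) \<ge> 1" using e1 False by (simp add: mult.commute)
        have S0: "2 ^ N * Gm N ^ N + (1 + A) ^ (9 * N) \<ge> 0"
          using g0 by (simp add: A_def add_nonneg_nonneg)
        have "2 ^ N * Gm N ^ N + (1 + A) ^ (9 * N) \<le> (2 ^ N * Gm N ^ N + (1 + A) ^ (9 * N)) * (exp (1/2) * exp (y/2))"
          using mult_left_mono[OF E S0] by simp
        then show ?thesis using X by linarith
      qed
      then show ?thesis unfolding K2_def A_def \<delta>_def using H
        by (intro mult_right_mono) (auto simp: algebra_simps)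
    qed
    finally show ?thesis unfolding y0_def by simp
  qed
qed

definition fblk :: "(nat \<Rightarrow> real) \<Rightarrow> (nat \<Rightarrow> real) \<Rightarrow> nat set \<Rightarrow> real \<Rightarrow> real" where
  "fblk c lam J t = (\<Sum>j\<in>J. c j * t powr lam j)"

lemma int_weight:
  fixes \<alpha> :: real
  assumes "\<alpha> > -1" shows "integrable lborel (\<lambda>x. (1 - x) powr \<alpha> * indicator {0..1} x)"
proof -
  have "(\<lambda>x. x powr \<alpha>) absolutely_integrable_on {0..1::real}"
    by (intro nonnegative_absolutely_integrable_1 integrable_on_powr_from_0) (use assms in auto)
  then have "integrable lebesgue (\<lambda>x. indicator {0..1} x *\<^sub>R x powr \<alpha>)" by (simp add: set_integrable_def)
  then have i1: "integrable lborel (\<lambda>x::real. indicator {0..1} x *\<^sub>R x powr \<alpha>)"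
    by (subst (asm) integrable_completion) auto
  have "integrable lborel (\<lambda>x. (\<lambda>x::real. indicator {0..1} x *\<^sub>R x powr \<alpha>) (1 + (-1) * x))"
    by (rule lborel_integrable_real_affine[OF i1]) simp
  moreover have "(\<lambda>x. (\<lambda>x::real. indicator {0..1} x *\<^sub>R x powr \<alpha>) (1 + (-1) * x)) = (\<lambda>x. (1 - x) powr \<alpha> * indicator {0..1} x)"
    by (auto simp: indicator_def fun_eq_iff)
  ultimately show ?thesis by simp
qed

lemma f_ES: "t > 0 \<Longrightarrow> l > 0 \<Longrightarrow> fblk c lam J t = ES c (\<lambda>j. lam j / l) J (l * ln t)"
  unfolding fblk_def ES_def powr_def by (intro sum.cong) auto

lemma f_bound01:
  assumes "0 \<le> t" "t \<le> 1" "\<forall>j\<in>J. lam j \<ge> 0"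
  shows "\<bar>fblk c lam J t\<bar> \<le> (\<Sum>j\<in>J. \<bar>c j\<bar>)"
proof -
  have "\<bar>fblk c lam J t\<bar> \<le> (\<Sum>j\<in>J. \<bar>c j * t powr lam j\<bar>)" unfolding fblk_def by (rule sum_abs)
  also have "\<dots> \<le> (\<Sum>j\<in>J. \<bar>c j\<bar>)"
  proof (intro sum_mono)
    fix j assume "j \<in> J"
    then have "t powr lam j \<le> 1" using assms by (intro powr_le1) auto
    then show "\<bar>c j * t powr lam j\<bar> \<le> \<bar>c j\<bar>" by (simp add: abs_mult mult_left_le)
  qed
  finally show ?thesis .
qed

lemma fblk_meas[measurable]: "fblk c lam J \<in> borel_measurable borel"
  unfolding fblk_def by measurable

lemma int_main:
  fixes \<alpha> s :: real
  assumes "\<alpha> > -1" "\<forall>j\<in>J. lam j \<ge> 0" "s > 0"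
  shows "integrable lborel (\<lambda>x. \<bar>fblk c lam J x\<bar> powr s * (1 - x) powr \<alpha> * indicator {0..1} x)"
proof (rule Bochner_Integration.integrable_bound[where f="\<lambda>x. (\<Sum>j\<in>J. \<bar>c j\<bar>) powr s * ((1 - x) powr \<alpha> * indicator {0..1} x)"])
  show "integrable lborel (\<lambda>x. (\<Sum>j\<in>J. \<bar>c j\<bar>) powr s * ((1 - x) powr \<alpha> * indicator {0..1} x))"
    using int_weight[OF assms(1)] by (rule integrable_mult_right)
  show "(\<lambda>x. \<bar>fblk c lam J x\<bar> powr s * (1 - x) powr \<alpha> * indicator {0..1} x) \<in> borel_measurable lborel"
    by measurable
  show "AE x in lborel. norm (\<bar>fblk c lam J x\<bar> powr s * (1 - x) powr \<alpha> * indicator {0..1} x)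
      \<le> norm ((\<Sum>j\<in>J. \<bar>c j\<bar>) powr s * ((1 - x) powr \<alpha> * indicator {0..1} x))"
  proof (intro AE_I2)
    fix x :: real
    show "norm (\<bar>fblk c lam J x\<bar> powr s * (1 - x) powr \<alpha> * indicator {0..1} x)
      \<le> norm ((\<Sum>j\<in>J. \<bar>c j\<bar>) powr s * ((1 - x) powr \<alpha> * indicator {0..1} x))"
    proof (cases "x \<in> {0..1}")
      case True
      have a: "\<bar>fblk c lam J x\<bar> powr s \<le> (\<Sum>j\<in>J. \<bar>c j\<bar>) powr s"
        using True assms by (intro powr_mono2 f_bound01) auto
      have w: "(1 - x) powr \<alpha> \<ge> 0" by simp
      have i: "indicator {0..1} x = (1::real)" using True by simp
      have "\<bar>fblk c lam J x\<bar> powr s * (1 - x) powr \<alpha> \<le> (\<Sum>j\<in>J. \<bar>c j\<bar>) powr s * (1 - x) powr \<alpha>"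
        using mult_right_mono[OF a w] .
      moreover have "\<bar>fblk c lam J x\<bar> powr s * (1 - x) powr \<alpha> \<ge> 0" by simp
      ultimately show ?thesis unfolding i real_norm_def by simp
    qed simp
  qed
qed

lemma weight_lb:
  fixes \<alpha> l x :: real
  assumes l: "l \<ge> 1" and x: "exp (-1/l) \<le> x" "x \<le> exp (-1/(2*l))"
  shows "4 powr \<bar>\<alpha>\<bar> * (l powr \<alpha> * (1 - x) powr \<alpha>) \<ge> 1" and "0 \<le> x" "x \<le> 1"
proof -
  show x0: "0 \<le> x" using x(1) by (smt (verit) exp_gt_zero)
  have "exp (-1/(2*l)) < 1" using l by simp
  then have x1: "x < 1" using x(2) by linarith
  then show "x \<le> 1" by simp
  define v where "v = l * (1 - x)"
  have "1 + (-1/l) \<le> exp (-1/l)" by (rule exp_ge_add_one_self)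
  then have "1 - x \<le> 1 / l" using x(1) by simp
  then have v1: "v \<le> 1" unfolding v_def using l by (simp add: field_simps)
  define u where "u = 1/(2*l)"
  have u0: "u > 0" "u \<le> 1/2" unfolding u_def using l by (auto simp: field_simps)
  have "1 + u \<le> exp u" by (rule exp_ge_add_one_self)
  then have "1 / exp u \<le> 1 / (1 + u)" using u0 by (intro divide_left_mono) auto
  then have eu: "exp (-u) \<le> 1 / (1 + u)" by (simp add: exp_minus inverse_eq_divide)
  have "-1/(2*l) = -u" unfolding u_def by simp
  then have "x \<le> exp (-u)" using x(2) by simp
  then have "x \<le> 1 / (1 + u)" using eu by linarith
  then have "1 - x \<ge> u / (1 + u)" using u0 by (simp add: field_simps)
  moreover have "u / (1 + u) \<ge> u / 2" using u0 by (intro divide_left_mono) auto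
  ultimately have "1 - x \<ge> 1 / (4 * l)" unfolding u_def by simp
  then have v4: "v \<ge> 1/4" unfolding v_def using l by (simp add: field_simps)
  have "l powr \<alpha> * (1 - x) powr \<alpha> = v powr \<alpha>" unfolding v_def using l x1 by (simp add: powr_mult)
  moreover have "4 powr \<bar>\<alpha>\<bar> * v powr \<alpha> \<ge> 1"
  proof (cases "\<alpha> \<ge> 0")
    case True
    have "(1/4) powr \<alpha> \<le> v powr \<alpha>" using v4 True by (intro powr_mono2) auto
    then have "4 powr \<alpha> * (1/4) powr \<alpha> \<le> 4 powr \<alpha> * v powr \<alpha>" by simp
    moreover have "4 powr \<alpha> * (1/4) powr \<alpha> = 1" by (simp add: powr_divide powr_mult[symmetric])
    ultimately show ?thesis using True by simp
  next
    case False
    have "1 powr \<alpha> \<le> v powr \<alpha>" using v1 v4 False by (intro powr_mono2') auto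
    moreover have "4 powr \<bar>\<alpha>\<bar> \<ge> 1" by (rule ge_one_powr_ge_zero) auto
    ultimately have "1 * 1 \<le> 4 powr \<bar>\<alpha>\<bar> * v powr \<alpha>"
      by (intro mult_mono) auto
    then show ?thesis by simp
  qed
  ultimately show "4 powr \<bar>\<alpha>\<bar> * (l powr \<alpha> * (1 - x) powr \<alpha>) \<ge> 1" by simp
qed

lemma IW:
  fixes \<alpha> s l :: real
  assumes J: "finite J" and l: "l \<ge> 1" and lamJ: "\<forall>j\<in>J. lam j \<ge> 0" and s: "s \<ge> 1" and \<alpha>: "\<alpha> > -1"
  shows "(\<integral>u. \<bar>ES c (\<lambda>j. lam j / l) J u\<bar> powr s * indicator {-1..-1/2} u \<partial>lborel)
     \<le> exp 1 * 4 powr \<bar>\<alpha>\<bar> * l powr (1+\<alpha>) * wLp_norm \<alpha> s (fblk c lam J) powr s"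
proof -
  define f where "f = fblk c lam J"
  define F where "F = ES c (\<lambda>j. lam j / l) J"
  define \<phi> where "\<phi> = (\<lambda>t. \<bar>f t\<bar> powr s)"
  define g where "g = (\<lambda>y::real. exp (y / l))"
  define g' where "g' = (\<lambda>y::real. exp (y / l) / l)"
  define Wint where "Wint = (\<integral>x. \<phi> x * (1 - x) powr \<alpha> * indicator {0..1} x \<partial>lborel)"
  have l0: "l > 0" using l by simp
  have fcont: "continuous_on {0<..} f" unfolding f_def fblk_def by (intro continuous_intros) auto
  have \<phi>cont: "continuous_on {0<..} \<phi>" unfolding \<phi>_def using s
    by (intro continuous_on_powr' continuous_intros fcont) auto
  have \<phi>isc: "isCont \<phi> x" if "x > 0" for x
    using \<phi>cont that by (simp add: continuous_on_eq_continuous_at)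
  have gpos: "g y > 0" for y unfolding g_def by simp
  have intA: "integrable lborel (\<lambda>x. \<phi> x * indicator {g (-1)..g (-1/2)} x)"
    by (rule borel_integrable_atLeastAtMost) (intro \<phi>isc, use gpos in \<open>smt (verit)\<close>)
  have int\<phi>: "set_integrable lborel {g (-1)..g (-1/2)} \<phi>"
    using intA unfolding set_integrable_def by (simp add: mult.commute)
  have deriv: "(g has_real_derivative g' x) (at x)" if "x \<in> {-1..-1/2}" for x
    unfolding g_def g'_def using l0 by (auto intro!: derivative_eq_intros)
  have contg': "continuous_on {-1..-1/2} g'" unfolding g'_def by (intro continuous_intros) (use l0 in auto)
  have g'0: "g' x \<ge> 0" if "x \<in> {-1..-1/2}" for x unfolding g'_def using l0 by simp
  have ab: "(-1::real) \<le> -1/2" by simp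
  note sub = integral_substitution[OF int\<phi> deriv contg' g'0 ab]
  have \<phi>g: "\<phi> (g y) = \<bar>F y\<bar> powr s" for y
  proof -
    have "f (g y) = F (l * ln (g y))" unfolding f_def F_def by (rule f_ES[OF gpos l0])
    also have "l * ln (g y) = y" unfolding g_def using l0 by simp
    finally show ?thesis unfolding \<phi>_def by simp
  qed
  have Fisc: "isCont (\<lambda>u. \<bar>F u\<bar> powr s) u" for u unfolding F_def using s by (intro g_cont) auto
  have step1: "(\<integral>u. \<bar>F u\<bar> powr s * indicator {-1..-1/2} u \<partial>lborel)
      \<le> (\<integral>u. (exp 1 * l) * (\<phi> (g u) * g' u * indicator {-1..-1/2} u) \<partial>lborel)"
  proof (rule integral_mono)
    show "integrable lborel (\<lambda>u. \<bar>F u\<bar> powr s * indicator {-1..-1/2} u)"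
      by (rule borel_integrable_atLeastAtMost) (rule Fisc)
    have "integrable lborel (\<lambda>u. \<phi> (g u) * g' u * indicator {-1..-1/2} u)"
      using sub(1) unfolding set_integrable_def by (simp add: mult.commute)
    then show "integrable lborel (\<lambda>u. (exp 1 * l) * (\<phi> (g u) * g' u * indicator {-1..-1/2} u))"
      by (rule integrable_mult_right)
    fix u :: real
    show "\<bar>F u\<bar> powr s * indicator {-1..-1/2} u \<le> (exp 1 * l) * (\<phi> (g u) * g' u * indicator {-1..-1/2} u)"
    proof (cases "u \<in> {-1..-1/2}")
      case True
      have "u / l \<ge> -1"
      proof -
        have "u / l \<ge> -1 / l" using True l0 by (intro divide_right_mono) auto
        moreover have "-1 / l \<ge> -1" using l by (simp add: field_simps)
        ultimately show ?thesis by linarith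
      qed
      then have "exp 1 * exp (u / l) \<ge> 1" by (simp add: exp_add[symmetric])
      then have "\<bar>F u\<bar> powr s * 1 \<le> \<bar>F u\<bar> powr s * (exp 1 * exp (u / l))"
        by (intro mult_left_mono) auto
      then show ?thesis using True l0 unfolding \<phi>g g'_def by (simp add: field_simps)
    qed simp
  qed
  also have "\<dots> = exp 1 * l * (\<integral>x. \<phi> x * indicator {g (-1)..g (-1/2)} x \<partial>lborel)"
    using sub(2) by simp
  finally have I1: "(\<integral>u. \<bar>F u\<bar> powr s * indicator {-1..-1/2} u \<partial>lborel) \<le> exp 1 * l * (\<integral>x. \<phi> x * indicator {g (-1)..g (-1/2)} x \<partial>lborel)" .
  have step2: "(\<integral>x. \<phi> x * indicator {g (-1)..g (-1/2)} x \<partial>lborel) \<le> (\<integral>x. (4 powr \<bar>\<alpha>\<bar> * l powr \<alpha>) * (\<phi> x * (1 - x) powr \<alpha> * indicator {0..1} x) \<partial>lborel)"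
  proof (rule integral_mono[OF intA])
    show "integrable lborel (\<lambda>x. (4 powr \<bar>\<alpha>\<bar> * l powr \<alpha>) * (\<phi> x * (1 - x) powr \<alpha> * indicator {0..1} x))"
      unfolding \<phi>_def f_def using int_main[OF \<alpha> lamJ, of s c] s by (intro integrable_mult_right) auto
    fix x :: real
    show "\<phi> x * indicator {g (-1)..g (-1/2)} x \<le> (4 powr \<bar>\<alpha>\<bar> * l powr \<alpha>) * (\<phi> x * (1 - x) powr \<alpha> * indicator {0..1} x)"
    proof (cases "x \<in> {g (-1)..g (-1/2)}")
      case True
      then have x: "exp (-1/l) \<le> x" "x \<le> exp (-1/(2*l))" unfolding g_def by auto
      note W1 = weight_lb(1)[OF l x, of \<alpha>]
      note W = weight_lb(2,3)[OF l x]
      have "\<phi> x * 1 \<le> \<phi> x * (4 powr \<bar>\<alpha>\<bar> * (l powr \<alpha> * (1 - x) powr \<alpha>))"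
        using W1 by (intro mult_left_mono) (auto simp: \<phi>_def)
      then show ?thesis using True W by (simp add: algebra_simps)
    next
      case False
      have "\<phi> x * (1 - x) powr \<alpha> * indicator {0..1} x \<ge> 0" by (simp add: \<phi>_def)
      then show ?thesis using False by simp
    qed
  qed
  also have "\<dots> = 4 powr \<bar>\<alpha>\<bar> * l powr \<alpha> * Wint" unfolding Wint_def by simp
  finally have I2: "(\<integral>x. \<phi> x * indicator {g (-1)..g (-1/2)} x \<partial>lborel) \<le> 4 powr \<bar>\<alpha>\<bar> * l powr \<alpha> * Wint" .
  have Wint0: "Wint \<ge> 0" unfolding Wint_def \<phi>_def by (intro integral_nonneg_AE) (auto simp: indicator_def)
  have Weq: "wLp_norm \<alpha> s (fblk c lam J) powr s = Wint"
  proof -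
    have "(LINT x:{0..1}|lborel. \<bar>fblk c lam J x\<bar> powr s * (1 - x) powr \<alpha>) = Wint"
      unfolding Wint_def set_lebesgue_integral_def \<phi>_def f_def by (simp add: mult.commute)
    then show ?thesis unfolding wLp_norm_def using Wint0 s by (simp add: powr_powr)
  qed
  have "(\<integral>u. \<bar>F u\<bar> powr s * indicator {-1..-1/2} u \<partial>lborel) \<le> exp 1 * l * (4 powr \<bar>\<alpha>\<bar> * l powr \<alpha> * Wint)"
    using I1 I2 l0 by (smt (verit) mult_left_mono exp_gt_zero mult_pos_pos)
  also have "\<dots> = exp 1 * 4 powr \<bar>\<alpha>\<bar> * (l * l powr \<alpha>) * Wint" by (simp add: algebra_simps)
  also have "l * l powr \<alpha> = l powr (1 + \<alpha>)" using l0 by (simp add: powr_add)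
  finally show ?thesis unfolding F_def Weq .
qed

definition KK :: "nat \<Rightarrow> real \<Rightarrow> real" where
  "KK N s = (2 ^ (2*N+1) * real (N+1)) powr s * real (N+1) * (8 * real (N+1))"

lemma KK_pos: "KK N s > 0" unfolding KK_def by simp

lemma pointwise:
  fixes \<alpha> s l Q t :: real
  assumes J: "finite J" "card J \<le> N" and N: "N \<ge> 1" and l: "l \<ge> 1"
    and lamJ: "\<forall>j\<in>J. l \<le> lam j \<and> lam j \<le> Q * l" and s: "s \<ge> 1" and \<alpha>: "\<alpha> > -1"
    and t: "0 \<le> t" "t \<le> 1"
  shows "\<bar>fblk c lam J t\<bar> \<le> K2 N Q * (KK N s * exp 1 * 4 powr \<bar>\<alpha>\<bar>) powr (1/s) * l powr ((1+\<alpha>)/s)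
            * wLp_norm \<alpha> s (fblk c lam J) * t powr (l/2)"
proof -
  define \<rho> where "\<rho> = (\<lambda>j. lam j / l)"
  define F where "F = ES c \<rho> J"
  define I where "I = (\<integral>u. \<bar>F u\<bar> powr s * indicator {-1..-1/2} u \<partial>lborel)"
  define W where "W = wLp_norm \<alpha> s (fblk c lam J)"
  define C where "C = (KK N s * exp 1 * 4 powr \<bar>\<alpha>\<bar>) powr (1/s) * l powr ((1+\<alpha>)/s) * W"
  have l0: "l > 0" using l by simp
  have \<rho>b: "\<forall>j\<in>J. 1 \<le> \<rho> j \<and> \<rho> j \<le> Q" unfolding \<rho>_def using lamJ l0
    by (auto simp: le_divide_eq divide_le_eq)
  have \<rho>0: "\<forall>j\<in>J. \<rho> j \<ge> 0" using \<rho>b by force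
  have lam0: "\<forall>j\<in>J. lam j \<ge> 0" using lamJ l by force
  have W0: "W \<ge> 0" unfolding W_def wLp_norm_def by simp
  have I0: "I \<ge> 0" unfolding I_def by (intro integral_nonneg_AE) (auto simp: indicator_def)
  have KK0: "KK N s > 0" by (rule KK_pos)
  define H where "H = (KK N s * I) powr (1/s)"
  have H0: "H \<ge> 0" unfolding H_def by simp
  have Hb: "\<forall>u\<in>{-1..-3/4}. \<bar>F u\<bar> \<le> H"
  proof
    fix u :: real assume u: "u \<in> {-1..-3/4}"
    have "\<bar>F u\<bar> powr s \<le> KK N s * I"
      using stage1[OF J \<rho>0 s, of u c] u unfolding KK_def I_def F_def by (simp add: algebra_simps)
    then have "(\<bar>F u\<bar> powr s) powr (1/s) \<le> (KK N s * I) powr (1/s)"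
      using s by (intro powr_mono2) auto
    moreover have "(\<bar>F u\<bar> powr s) powr (1/s) = \<bar>F u\<bar>" using s by (simp add: powr_powr)
    ultimately show "\<bar>F u\<bar> \<le> H" unfolding H_def by simp
  qed
  have IWb: "I \<le> exp 1 * 4 powr \<bar>\<alpha>\<bar> * l powr (1+\<alpha>) * W powr s"
    unfolding I_def F_def \<rho>_def W_def by (rule IW[OF J(1) l lam0 s \<alpha>])
  have HW: "H \<le> C"
  proof -
    have "H \<le> (KK N s * (exp 1 * 4 powr \<bar>\<alpha>\<bar> * l powr (1+\<alpha>) * W powr s)) powr (1/s)"
      unfolding H_def using s IWb KK0 I0 by (intro powr_mono2 mult_left_mono) auto
    also have "\<dots> = ((KK N s * exp 1 * 4 powr \<bar>\<alpha>\<bar>) * l powr (1+\<alpha>) * W powr s) powr (1/s)"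
      by (simp add: algebra_simps)
    also have "\<dots> = (KK N s * exp 1 * 4 powr \<bar>\<alpha>\<bar>) powr (1/s) * (l powr (1+\<alpha>)) powr (1/s) * (W powr s) powr (1/s)"
      using KK0 by (simp add: powr_mult)
    also have "(l powr (1+\<alpha>)) powr (1/s) = l powr ((1+\<alpha>)/s)" by (simp add: powr_powr)
    also have "(W powr s) powr (1/s) = W" using s W0 by (simp add: powr_powr)
    finally show ?thesis unfolding C_def .
  qed
  have C0: "C \<ge> 0" unfolding C_def using W0 by simp
  show ?thesis
  proof (cases "t = 0")
    case True
    have "fblk c lam J t = 0" unfolding fblk_def True by simp
    moreover have "K2 N Q * C * t powr (l/2) \<ge> 0"
      using K2_pos[OF N, of Q] C0 by (intro mult_nonneg_nonneg) auto
    ultimately show ?thesis unfolding C_def W_def by (simp add: algebra_simps)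
  next
    case False
    then have t0: "t > 0" using t by simp
    define y where "y = l * ln t"
    have y0: "y \<le> 0" unfolding y_def using t0 t l0 by (simp add: mult_nonneg_nonpos)
    have fe: "fblk c lam J t = F y" unfolding F_def y_def \<rho>_def by (rule f_ES[OF t0 l0])
    have ey: "exp (y/2) = t powr (l/2)" unfolding y_def powr_def using t0 by simp
    have "\<bar>F y\<bar> \<le> K2 N Q * exp (y/2) * H"
      unfolding F_def by (rule stage2[OF J N \<rho>b H0 Hb[unfolded F_def] y0])
    also have "\<dots> \<le> K2 N Q * exp (y/2) * C"
    proof (rule mult_left_mono[OF HW])
      show "0 \<le> K2 N Q * exp (y/2)" using K2_pos[OF N, of Q] by simp
    qed
    finally show ?thesis unfolding fe ey C_def W_def by (simp add: algebra_simps)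
  qed
qed

lemma summ_beta: fixes \<beta> :: real shows "summable (\<lambda>i::nat. exp (- real i / 2) * (real i + 1) powr \<beta>)"
proof (rule summable_comparison_test_bigo)
  have "(\<lambda>i::nat. exp (- 1/4::real) ^ i) = (\<lambda>i. exp (- real i / 4))"
    by (auto simp: exp_of_nat_mult[symmetric] fun_eq_iff)
  have "summable (\<lambda>i::nat. exp (- 1/4::real) ^ i)" by (rule summable_geometric) simp
  then show "summable (\<lambda>i::nat. norm (exp (- 1/4::real) ^ i))" by simp
  show "(\<lambda>i::nat. exp (- real i / 2) * (real i + 1) powr \<beta>) \<in> O(\<lambda>i. exp (- 1/4::real) ^ i)"
  proof -
    have "(\<lambda>i::nat. exp (- real i / 2) * (real i + 1) powr \<beta>) \<in> O(\<lambda>i. exp (- real i / 4))"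
      by real_asymp
    also have "(\<lambda>i::nat. exp (- real i / 4)) = (\<lambda>i. exp (- 1/4::real) ^ i)"
      by (auto simp: exp_of_nat_mult[symmetric] fun_eq_iff)
    finally show ?thesis .
  qed
qed

definition Sb :: "real \<Rightarrow> real" where "Sb \<beta> = (\<Sum>i. exp (- real i / 2) * (real i + 1) powr \<beta>)"

lemma Sb_nonneg: "Sb \<beta> \<ge> 0"
  unfolding Sb_def using summ_beta[of \<beta>] by (intro suminf_nonneg) auto

lemma mu_facts:
  fixes \<beta> Cmu :: real and \<mu> :: "real measure"
  assumes M: "in_M_beta \<beta> Cmu \<mu>" and \<beta>: "\<beta> > 0"
  shows "space \<mu> = UNIV" and "sets \<mu> = sets borel" and "finite_measure \<mu>"
    and "emeasure \<mu> (-{0..1}) = 0"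
    and "\<And>\<epsilon>. \<epsilon> > 0 \<Longrightarrow> measure \<mu> {1-\<epsilon>..1} \<le> max 0 Cmu * \<epsilon> powr \<beta>"
proof -
  have s: "sets \<mu> = sets borel" and o: "emeasure \<mu> (- {0..1}) = 0"
    and h: "\<forall>\<epsilon>\<in>{0<..1}. emeasure \<mu> {1 - \<epsilon>..1} \<le> ennreal (Cmu * \<epsilon> powr \<beta>)"
    using M unfolding in_M_beta_def by auto
  show sp: "space \<mu> = UNIV" using sets_eq_imp_space_eq[OF s] by simp
  show "sets \<mu> = sets borel" by (rule s)
  show "emeasure \<mu> (-{0..1}) = 0" by (rule o)
  have h1: "emeasure \<mu> {0..1} \<le> ennreal Cmu" using h[rule_format, of 1] by simp
  have meas: "A \<in> sets \<mu>" if "A \<in> sets borel" for A using that s by simp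
  have "emeasure \<mu> UNIV = emeasure \<mu> ({0..1} \<union> -{0..1})" by simp
  also have "\<dots> = emeasure \<mu> {0..1} + emeasure \<mu> (-{0..1})"
    by (rule plus_emeasure[symmetric]) (auto intro: meas)
  also have "\<dots> \<le> ennreal Cmu" using h1 o by simp
  finally have "emeasure \<mu> (space \<mu>) \<noteq> \<infinity>" using sp by (auto simp: top_unique)
  then show fm: "finite_measure \<mu>" by (rule finite_measureI)
  have mb1: "measure \<mu> {1-\<epsilon>..1} \<le> max 0 Cmu * \<epsilon> powr \<beta>" if e: "0 < \<epsilon>" "\<epsilon> \<le> 1" for \<epsilon>
  proof -
    have "ennreal (measure \<mu> {1-\<epsilon>..1}) = emeasure \<mu> {1-\<epsilon>..1}"
      using finite_measure.emeasure_eq_measure[OF fm] by simp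
    also have "\<dots> \<le> ennreal (Cmu * \<epsilon> powr \<beta>)" using h e by auto
    also have "\<dots> \<le> ennreal (max 0 Cmu * \<epsilon> powr \<beta>)"
      by (intro ennreal_leI mult_right_mono) auto
    finally show ?thesis by (subst (asm) ennreal_le_iff) auto
  qed
  show "measure \<mu> {1-\<epsilon>..1} \<le> max 0 Cmu * \<epsilon> powr \<beta>" if e: "\<epsilon> > 0" for \<epsilon>
  proof (cases "\<epsilon> \<le> 1")
    case True then show ?thesis using mb1 e by auto
  next
    case False
    have m0: "measure \<mu> (-{0..1}) = 0" using o by (simp add: measure_def)
    have "measure \<mu> {1-\<epsilon>..1} \<le> measure \<mu> ({0..1} \<union> -{0..1})"
      by (intro finite_measure.finite_measure_mono[OF fm]) (auto intro: meas)
    also have "\<dots> \<le> measure \<mu> {0..1} + measure \<mu> (-{0..1})"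
      by (intro measure_Un_le) (auto intro: meas)
    also have "\<dots> = measure \<mu> {1-1..1}" using m0 by simp
    also have "\<dots> \<le> max 0 Cmu * 1 powr \<beta>" by (rule mb1) auto
    also have "\<dots> \<le> max 0 Cmu * \<epsilon> powr \<beta>"
      using False \<beta> by (intro mult_left_mono powr_mono2) auto
    finally show ?thesis .
  qed
qed

lemma mu_int:
  fixes \<beta> Cmu l :: real and \<mu> :: "real measure"
  assumes M: "in_M_beta \<beta> Cmu \<mu>" and \<beta>: "\<beta> > 0" and l: "l \<ge> 1"
  shows "(\<integral>t. t powr (l/2) * indicator {0..1} t \<partial>\<mu>) \<le> max 0 Cmu * Sb \<beta> * l powr (-\<beta>)"
proof -
  note mf = mu_facts[OF M \<beta>]
  interpret finite_measure \<mu> by (rule mf(3))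
  define L where "L = nat \<lceil>l\<rceil>"
  define A where "A = (\<lambda>i::nat. {1 - (real i + 1)/l .. 1::real})"
  define a where "a = (\<lambda>i::nat. exp (- real i / 2))"
  have l0: "l > 0" using l by simp
  have a0: "a i \<ge> 0" for i unfolding a_def by simp
  have pt: "t powr (l/2) * indicator {0..1} t \<le> (\<Sum>i\<in>{..L}. a i * indicator (A i) t)" for t
  proof (cases "t \<in> {0..1}")
    case False
    have "(\<Sum>i\<in>{..L}. a i * indicator (A i) t) \<ge> 0" using a0 by (intro sum_nonneg) auto
    then show ?thesis using False by simp
  next
    case True
    define i0 where "i0 = nat \<lfloor>l * (1 - t)\<rfloor>"
    have lt0: "l * (1 - t) \<ge> 0" using True l0 by simp
    have i01: "real i0 \<le> l * (1 - t)" unfolding i0_def using lt0 by linarith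
    have i02: "l * (1 - t) < real i0 + 1" unfolding i0_def using lt0 by linarith
    have i0L: "i0 \<le> L"
    proof -
      have "l * (1 - t) \<le> l * 1" using True l0 by (intro mult_left_mono) auto
      then have "real i0 \<le> l" using i01 by linarith
      then have "real i0 \<le> real_of_int \<lceil>l\<rceil>" by linarith
      then show ?thesis unfolding L_def by linarith
    qed
    have tA: "t \<in> A i0"
    proof -
      have "1 - t < (real i0 + 1) / l" using i02 l0 by (simp add: less_divide_eq mult.commute)
      then show ?thesis unfolding A_def using True by auto
    qed
    have tp: "t powr (l/2) \<le> a i0"
    proof (cases "t = 0")
      case True then show ?thesis using a0 by simp
    next
      case False
      then have t0: "t > 0" using \<open>t \<in> {0..1}\<close> by simp
      have "ln t \<le> t - 1" using t0 by (rule ln_le_minus_one)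
      then have "l / 2 * ln t \<le> l / 2 * (t - 1)" using l0 by (intro mult_left_mono) auto
      also have "\<dots> = - (l * (1 - t)) / 2" by (simp add: algebra_simps)
      also have "\<dots> \<le> - real i0 / 2" using i01 by simp
      finally have "exp (l / 2 * ln t) \<le> exp (- real i0 / 2)" by simp
      then show ?thesis unfolding a_def powr_def using t0 by simp
    qed
    have "t powr (l/2) * indicator {0..1} t = t powr (l/2)" using True by simp
    also have "\<dots> \<le> a i0 * indicator (A i0) t" using tp tA by simp
    also have "\<dots> \<le> (\<Sum>i\<in>{..L}. a i * indicator (A i) t)"
      using i0L a0 by (intro member_le_sum[where f="\<lambda>i. a i * indicator (A i) t"]) auto
    finally show ?thesis .
  qed
  have Asets: "A i \<in> sets \<mu>" for i unfolding A_def using mf(2) by simp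
  have intI: "integrable \<mu> (\<lambda>t. a i * indicator (A i) t)" for i
    using Asets by (intro integrable_mult_right integrable_real_indicator) (auto simp: less_top[symmetric])
  have intR: "integrable \<mu> (\<lambda>t. \<Sum>i\<in>{..L}. a i * indicator (A i) t)"
    by (rule Bochner_Integration.integrable_sum) (rule intI)
  have "(\<integral>t. t powr (l/2) * indicator {0..1} t \<partial>\<mu>) \<le> (\<integral>t. (\<Sum>i\<in>{..L}. a i * indicator (A i) t) \<partial>\<mu>)"
    by (rule integral_mono'[OF intR]) (use pt a0 in \<open>auto intro: sum_nonneg\<close>)
  also have "\<dots> = (\<Sum>i\<in>{..L}. (\<integral>t. a i * indicator (A i) t \<partial>\<mu>))"
    by (rule Bochner_Integration.integral_sum) (rule intI)
  also have "\<dots> = (\<Sum>i\<in>{..L}. a i * measure \<mu> (A i))"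
    using mf(1) by (simp add: integral_mult_right_zero)
  also have "\<dots> \<le> (\<Sum>i\<in>{..L}. a i * (max 0 Cmu * ((real i + 1) / l) powr \<beta>))"
  proof (intro sum_mono mult_left_mono[OF _ a0])
    fix i assume "i \<in> {..L}"
    have "(real i + 1) / l > 0" using l0 by simp
    then show "measure \<mu> (A i) \<le> max 0 Cmu * ((real i + 1) / l) powr \<beta>"
      unfolding A_def by (rule mf(5))
  qed
  also have "\<dots> = max 0 Cmu * l powr (-\<beta>) * (\<Sum>i\<in>{..L}. a i * (real i + 1) powr \<beta>)"
    using l0 by (simp add: sum_distrib_left powr_divide powr_minus_divide algebra_simps)
  also have "\<dots> \<le> max 0 Cmu * l powr (-\<beta>) * Sb \<beta>"
  proof (intro mult_left_mono)
    show "(\<Sum>i\<in>{..L}. a i * (real i + 1) powr \<beta>) \<le> Sb \<beta>"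
      unfolding Sb_def a_def using summ_beta[of \<beta>] by (intro sum_le_suminf) auto
  qed simp
  finally show ?thesis by (simp add: algebra_simps)
qed

lemma Dp: fixes D p :: real assumes "D \<ge> 0" "p \<ge> 1" shows "D powr (1/p) \<le> 1 + D"
proof (cases "D \<le> 1")
  case True
  then have "D powr (1/p) \<le> 1" using assms by (intro powr_le1) auto
  then show ?thesis using assms by simp
next
  case False
  then have "D powr (1/p) \<le> D powr 1" using assms by (intro powr_mono) auto
  then show ?thesis using assms by simp
qed

lemma ypow: fixes y p :: real assumes "0 \<le> y" "y \<le> 1" "p \<ge> 1" shows "y powr p \<le> y"
proof -
  have "y powr p \<le> y powr 1" using assms by (intro powr_mono') auto
  then show ?thesis using assms by simp
qed

lemma Lp_step:
  fixes p l B \<beta> Cmu :: real and \<mu> :: "real measure" and f :: "real \<Rightarrow> real"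
  assumes M: "in_M_beta \<beta> Cmu \<mu>" and \<beta>: "\<beta> > 0" and l: "l \<ge> 1" and p: "p \<ge> 1" and B0: "B \<ge> 0"
    and fm: "f \<in> borel_measurable borel"
    and pt: "\<forall>t\<in>{0..1}. \<bar>f t\<bar> \<le> B * t powr (l/2)"
  shows "Lp_norm \<mu> p f \<le> B * (1 + max 0 Cmu * Sb \<beta>) * l powr (- \<beta> / p)"
proof -
  note mf = mu_facts[OF M \<beta>]
  interpret finite_measure \<mu> by (rule mf(3))
  define D where "D = max 0 Cmu * Sb \<beta>"
  have D0: "D \<ge> 0" unfolding D_def using Sb_nonneg by simp
  have l0: "l > 0" using l by simp
  have AE01: "AE x in \<mu>. x \<in> {0..1}"
  proof (rule AE_I[where N="-{0..1}"])
    show "{x \<in> space \<mu>. x \<notin> {0..1}} \<subseteq> - {0..1}" by auto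
    show "emeasure \<mu> (- {0..1}) = 0" by (rule mf(4))
    show "- {0..1} \<in> sets \<mu>" using mf(2) by simp
  qed
  have meas: "(\<lambda>t. B powr p * (t powr (l/2) * indicator {0..1} t)) \<in> borel_measurable \<mu>"
  proof -
    have m1: "(\<lambda>t::real. t powr (l/2)) \<in> borel_measurable borel" by (rule powr_real_measurable) auto
    have m2: "(indicator {0..1::real} :: real \<Rightarrow> real) \<in> borel_measurable borel" by (rule borel_measurable_indicator) simp
    have "(\<lambda>t. B powr p * (t powr (l/2) * indicator {0..1} t)) \<in> borel_measurable borel"
      using m1 m2 by (intro borel_measurable_times borel_measurable_const)
    then show ?thesis by (subst measurable_cong_sets[OF mf(2) refl])
  qed
  have int_rhs: "integrable \<mu> (\<lambda>t. B powr p * (t powr (l/2) * indicator {0..1} t))"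
  proof (rule integrable_const_bound[where B="B powr p"])
    show "AE x in \<mu>. norm (B powr p * (x powr (l/2) * indicator {0..1} x)) \<le> B powr p"
    proof (intro AE_I2)
      fix x :: real
      show "norm (B powr p * (x powr (l/2) * indicator {0..1} x)) \<le> B powr p"
      proof (cases "x \<in> {0..1}")
        case True
        have "x powr (l/2) \<le> 1" using True l0 by (intro powr_le1) auto
        then have "B powr p * x powr (l/2) \<le> B powr p * 1" by (intro mult_left_mono) auto
        then show ?thesis using True by simp
      qed simp
    qed
  qed (rule meas)
  have "(\<integral>x. \<bar>f x\<bar> powr p \<partial>\<mu>) \<le> (\<integral>x. B powr p * (x powr (l/2) * indicator {0..1} x) \<partial>\<mu>)"
  proof (rule integral_mono_AE'[OF int_rhs])
    show "AE x in \<mu>. \<bar>f x\<bar> powr p \<le> B powr p * (x powr (l/2) * indicator {0..1} x)"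
      using AE01
    proof eventually_elim
      case (elim x)
      have y: "0 \<le> x powr (l/2)" "x powr (l/2) \<le> 1" using elim l0 by (auto intro: powr_le1)
      have "\<bar>f x\<bar> powr p \<le> (B * x powr (l/2)) powr p" using pt elim p by (intro powr_mono2) auto
      also have "\<dots> = B powr p * (x powr (l/2)) powr p" using B0 by (simp add: powr_mult)
      also have "\<dots> \<le> B powr p * x powr (l/2)" using ypow[OF y p] by (intro mult_left_mono) auto
      finally show ?case using elim by simp
    qed
    show "AE x in \<mu>. 0 \<le> B powr p * (x powr (l/2) * indicator {0..1} x)" by simp
  qed
  also have "\<dots> = B powr p * (\<integral>x. x powr (l/2) * indicator {0..1} x \<partial>\<mu>)" by simp
  also have "\<dots> \<le> B powr p * (D * l powr (-\<beta>))"
    using mu_int[OF M \<beta> l] unfolding D_def by (intro mult_left_mono) (auto simp: algebra_simps)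
  finally have I: "(\<integral>x. \<bar>f x\<bar> powr p \<partial>\<mu>) \<le> B powr p * (D * l powr (-\<beta>))" .
  have "Lp_norm \<mu> p f \<le> (B powr p * (D * l powr (-\<beta>))) powr (1/p)"
    unfolding Lp_norm_def using I p by (intro powr_mono2) auto
  also have "\<dots> = (B powr p) powr (1/p) * D powr (1/p) * (l powr (-\<beta>)) powr (1/p)"
    using D0 by (simp add: powr_mult)
  also have "\<dots> = B * D powr (1/p) * l powr (-\<beta>/p)"
    using B0 p by (simp add: powr_powr)
  also have "\<dots> \<le> B * (1 + D) * l powr (-\<beta>/p)"
    using Dp[OF D0 p] B0 by (intro mult_right_mono mult_left_mono) auto
  finally show ?thesis unfolding D_def .
qed

theorem proposition2p5:
  fixes q :: real and N :: nat and \<alpha> \<beta> Cmu :: real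
  assumes "q > 1" and "N \<ge> 1" and "\<beta> > 0" and "\<alpha> > -1"
  shows "\<exists>C :: real \<Rightarrow> real \<Rightarrow> real. (\<forall>p s. C p s > 0) \<and>
    (\<forall>(lam :: nat \<Rightarrow> real) (nb :: nat \<Rightarrow> nat) (\<mu> :: real measure).
       muntz_seq lam \<longrightarrow> quasi_lacunary lam q N nb \<longrightarrow> in_M_beta \<beta> Cmu \<mu> \<longrightarrow>
       (\<exists>k0 :: nat. k0 > 0 \<and> (\<forall>k \<ge> k0. \<forall>p s :: real. p \<ge> 1 \<longrightarrow> s \<ge> 1 \<longrightarrow>
          (\<forall>f \<in> block_space lam nb k.
             Lp_norm \<mu> p f \<le> C p s * lam (nb k) powr ((1 + \<alpha>) / s - \<beta> / p) * wLp_norm \<alpha> s f))))"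
proof -
  note q = assms(1) and N = assms(2) and \<beta> = assms(3) and \<alpha> = assms(4)
  define Q where "Q = q ^ (2 * N)"
  define D where "D = max 0 Cmu * Sb \<beta>"
  define C where "C = (\<lambda>(p::real) s. K2 N Q * (KK N s * exp 1 * 4 powr \<bar>\<alpha>\<bar>) powr (1/s) * (1 + D))"
  have D0: "D \<ge> 0" unfolding D_def using Sb_nonneg by simp
  have Cpos: "\<forall>p s. C p s > 0"
  proof (intro allI)
    fix p s :: real
    have "KK N s * exp 1 * 4 powr \<bar>\<alpha>\<bar> > 0" using KK_pos[of N s] by simp
    then have "(KK N s * exp 1 * 4 powr \<bar>\<alpha>\<bar>) powr (1/s) > 0" by (simp only: powr_gt_zero)
    then show "C p s > 0" unfolding C_def using K2_pos[OF N, of Q] D0 by simp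
  qed
  show ?thesis
  proof (intro exI[of _ C] conjI Cpos allI impI)
    fix lam :: "nat \<Rightarrow> real" and nb :: "nat \<Rightarrow> nat" and \<mu> :: "real measure"
    assume mu: "muntz_seq lam" and ql: "quasi_lacunary lam q N nb" and M: "in_M_beta \<beta> Cmu \<mu>"
    have sm: "strict_mono lam" and pos: "\<forall>j. 0 < lam j" and su: "summable (\<lambda>j. 1 / lam j)"
      using mu unfolding muntz_seq_def by auto
    have snb: "strict_mono nb" and cardb: "\<forall>k. nb (Suc k) - nb k \<le> N"
      and rat: "\<forall>k. lam (nb (Suc k)) / lam (nb k) \<le> q ^ (2 * N)"
      using ql unfolding quasi_lacunary_def by auto
    have "(\<lambda>j. 1 / lam j) \<longlonglongrightarrow> 0" by (rule summable_LIMSEQ_zero[OF su])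
    then have "eventually (\<lambda>j. 1 / lam j < 1) sequentially"
      by (rule order_tendstoD(2)) simp
    then obtain K where K: "\<And>j. j \<ge> K \<Longrightarrow> 1 / lam j < 1" unfolding eventually_sequentially by blast
    show "\<exists>k0. k0 > 0 \<and> (\<forall>k \<ge> k0. \<forall>p s :: real. p \<ge> 1 \<longrightarrow> s \<ge> 1 \<longrightarrow>
          (\<forall>f \<in> block_space lam nb k.
             Lp_norm \<mu> p f \<le> C p s * lam (nb k) powr ((1 + \<alpha>) / s - \<beta> / p) * wLp_norm \<alpha> s f))"
    proof (intro exI[of _ "K+1"] conjI allI impI ballI)
      show "K + 1 > (0::nat)" by simp
      fix k :: nat and p s :: real and f
      assume k: "K + 1 \<le> k" and p: "1 \<le> p" and s: "1 \<le> s" and f: "f \<in> block_space lam nb k"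
      define l where "l = lam (nb k)"
      define J where "J = {nb k..<nb (Suc k)}"
      have "k \<le> nb k" using snb by (rule strict_mono_imp_increasing)
      then have "1 / l < 1" unfolding l_def using K k by simp
      moreover have l0: "l > 0" unfolding l_def using pos by simp
      ultimately have l1: "l \<ge> 1" by (simp add: divide_less_eq)
      obtain c where fc: "f = (\<lambda>t. \<Sum>j\<in>J. c j * t powr lam j)"
        using f unfolding block_space_def J_def by blast
      have ff: "f = fblk c lam J" unfolding fc fblk_def by simp
      have Jf: "finite J" unfolding J_def by simp
      have Jc: "card J \<le> N" unfolding J_def using cardb by simp
      have lamJ: "\<forall>j\<in>J. l \<le> lam j \<and> lam j \<le> Q * l"
      proof
        fix j assume "j \<in> J"
        then have j: "nb k \<le> j" "j < nb (Suc k)" unfolding J_def by auto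
        have "l \<le> lam j" unfolding l_def using j(1) sm by (simp add: strict_mono_less_eq)
        moreover have "lam j < lam (nb (Suc k))" using j(2) sm by (simp add: strict_mono_less)
        moreover have "lam (nb (Suc k)) \<le> Q * l"
          using rat[rule_format, of k] l0 unfolding Q_def l_def by (simp add: divide_le_eq)
        ultimately show "l \<le> lam j \<and> lam j \<le> Q * l" by simp
      qed
      define W where "W = wLp_norm \<alpha> s f"
      define B where "B = K2 N Q * (KK N s * exp 1 * 4 powr \<bar>\<alpha>\<bar>) powr (1/s) * l powr ((1+\<alpha>)/s) * W"
      have W0: "W \<ge> 0" unfolding W_def wLp_norm_def by simp
      have B0: "B \<ge> 0" unfolding B_def using K2_pos[OF N, of Q] W0 by simp
      have pt: "\<forall>t\<in>{0..1}. \<bar>f t\<bar> \<le> B * t powr (l/2)"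
        using pointwise[OF Jf Jc N l1 lamJ s \<alpha>] unfolding B_def W_def ff by auto
      have fm: "f \<in> borel_measurable borel" unfolding ff by (rule fblk_meas)
      have "Lp_norm \<mu> p f \<le> B * (1 + D) * l powr (- \<beta> / p)"
        unfolding D_def by (rule Lp_step[OF M \<beta> l1 p B0 fm pt])
      also have "\<dots> = C p s * (l powr ((1+\<alpha>)/s) * l powr (- \<beta> / p)) * W"
        unfolding B_def C_def by (simp add: algebra_simps)
      also have "l powr ((1+\<alpha>)/s) * l powr (- \<beta> / p) = l powr ((1 + \<alpha>) / s - \<beta> / p)"
        by (simp add: powr_add[symmetric])
      finally show "Lp_norm \<mu> p f \<le> C p s * lam (nb k) powr ((1 + \<alpha>) / s - \<beta> / p) * wLp_norm \<alpha> s f"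
        unfolding l_def W_def .
    qed
  qed
qed

end
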